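(* Assume $\sigma_1(x)=\sigma_1'(0)x$ with $\sigma_1'(0)\ne0$, so that $\sigma_2(x)=\tfrac12\sigma_2''(0)x^2+\sigma_2'(0)x=\tfrac12\sigma_2''(0)\,x(x-a_2)$ with $\tfrac12\sigma_2''(0)=q(1-q^{-1})\tau'(0)$ and $\sigma_2'(0)=q[\sigma_1'(0)+(1-q^{-1})\tau(0)]\ne0$. Let $\Lambda_q=\tau'(0)/\sigma_1'(0)$ and $y_0=q^{-1}\Big[1+\frac{(1-q^{-1})\tau(0)}{\sigma_1'(0)}\Big]$, and assume $\Lambda_q<0$, $a_2<0$ and $0<qy_0<1$. Let $$\rho(x)=|x|^{\alpha}\frac{1}{(x/a_2;q)_\infty},\qquad q^{\alpha}=-\frac{q^{-2}\tfrac12\sigma_2''(0)a_2}{\sigma_1'(0)}.$$ Then there exist polynomials $P_n$, $n\in\mathbb{N}_0$, with $P_n$ of degree $n$ a solution of the q-EHT with $\lambda=\lambda_n$, and nonzero constants $d_n^2$, such that for all $m,n\in\mathbb{N}_0$ $$\int_0^{\infty}P_n(x)P_m(x)\rho(x)\,d_qx=d_n^2\delta_{mn},$$ i.e. orthogonality with respect to $\rho$ supported on $\{q^{\pm k}\}_{k\in\mathbb{N}_0}$.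
   Context: Throughout $0<q<1$. For a function $y$ and $\zeta\in\{q,q^{-1}\}$, $D_\zeta y(x)=\frac{y(x)-y(\zeta x)}{(1-\zeta)x}$ for $x\ne0$ and $D_\zeta y(0)=y'(0)$; $[n]_q=\frac{1-q^n}{1-q}$. Let $\sigma_1$ be a real polynomial of degree at most two, $\tau(x)=\tau'(0)x+\tau(0)$ a real polynomial with $\tau'(0)\ne0$, and $\sigma_2(x):=q[\sigma_1(x)+(1-q^{-1})x\tau(x)]$. The q-EHT with parameter $n$ is $\sigma_1(x)D_{q^{-1}}D_qy(x)+\tau(x)D_qy(x)+\lambda_ny(x)=0$, $\lambda_n=-[n]_q\big(\tau'(0)+\tfrac12[n-1]_{q^{-1}}\sigma_1''(0)\big)$. $(\beta;q)_\infty=\prod_{k\ge0}(1-\beta q^k)$. For $q^\alpha=c$ ($c\ne0$), $\alpha$ is any complex number with $e^{\alpha\ln q}=c$ and $|x|^\alpha:=e^{\alpha\ln|x|}$. The improper $q$-Jackson integral is $\int_0^\infty f(x)\,d_qx=(1-q)\sum_{j=-\infty}^{\infty}q^jf(q^j)$. *)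

theory Defs
  imports "HOL-Analysis.Analysis" "HOL-Computational_Algebra.Polynomial"
begin

definition qD :: "real \<Rightarrow> (real \<Rightarrow> real) \<Rightarrow> real \<Rightarrow> real" where
  "qD \<zeta> y x = (if x = 0 then deriv y 0 else (y x - y (\<zeta> * x)) / ((1 - \<zeta>) * x))"

definition qnum :: "real \<Rightarrow> int \<Rightarrow> real" where
  "qnum q k = (1 - q powi k) / (1 - q)"

definition sigma2 :: "real \<Rightarrow> real poly \<Rightarrow> real poly \<Rightarrow> real poly" where
  "sigma2 q \<sigma>1 \<tau> = smult q (\<sigma>1 + [:0, 1 - 1/q:] * \<tau>)"

text \<open>lambda_n = -[n]_q (tau'(0) + 1/2 [n-1]_{q^{-1}} sigma_1''(0)); note sigma_1''(0) = 2 * coeff sigma_1 2.\<close>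
definition qEHT_lambda :: "real \<Rightarrow> real poly \<Rightarrow> real poly \<Rightarrow> nat \<Rightarrow> real" where
  "qEHT_lambda q \<sigma>1 \<tau> n =
     - qnum q (int n) * (coeff \<tau> 1 + (1/2) * qnum (1/q) (int n - 1) * (2 * coeff \<sigma>1 2))"

definition qEHT_solution :: "real \<Rightarrow> real poly \<Rightarrow> real poly \<Rightarrow> real \<Rightarrow> (real \<Rightarrow> real) \<Rightarrow> bool" where
  "qEHT_solution q \<sigma>1 \<tau> lam y \<longleftrightarrow>
     (\<forall>x. poly \<sigma>1 x * qD (1/q) (qD q y) x + poly \<tau> x * qD q y x + lam * y x = 0)"

definition qpoch_inf :: "real \<Rightarrow> real \<Rightarrow> real" where
  "qpoch_inf \<beta> q = (\<Prod>k. 1 - \<beta> * q ^ k)"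

definition jackson_integral_0_inf_has :: "real \<Rightarrow> (real \<Rightarrow> complex) \<Rightarrow> complex \<Rightarrow> bool" where
  "jackson_integral_0_inf_has q f I \<longleftrightarrow>
     ((\<lambda>j::int. complex_of_real ((1 - q) * q powi j) * f (q powi j)) has_sum I) UNIV"

definition abs_cpow :: "real \<Rightarrow> complex \<Rightarrow> complex" where
  "abs_cpow x \<alpha> = exp (\<alpha> * complex_of_real (ln \<bar>x\<bar>))"

end

theory Submission
  imports Defs
begin


definition shp :: "real \<Rightarrow> real poly \<Rightarrow> real poly" where
  "shp a p = pcompose p [:0, a:]"

lemma poly_shp[simp]: "poly (shp a p) x = poly p (a * x)"
  by (simp add: shp_def poly_pcompose mult.commute)

lemma coeff_shp: "coeff (shp a p) k = a ^ k * coeff p k"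
proof (induction p arbitrary: k)
  case 0 then show ?case by (simp add: shp_def)
next
  case (pCons c p)
  have e: "shp a (pCons c p) = [:c:] + pCons 0 (smult a (shp a p))"
    by (simp add: shp_def pcompose_pCons)
  show ?case
  proof (cases k)
    case 0 then show ?thesis by (simp add: e)
  next
    case (Suc i) then show ?thesis using pCons.IH[of i] by (simp add: e coeff_pCons)
  qed
qed

definition Eop :: "real \<Rightarrow> real \<Rightarrow> real \<Rightarrow> real \<Rightarrow> real poly \<Rightarrow> real poly" where
  "Eop s q A B p = smult (s * q^2) (shp (1/q) p - p) - [:A, B:] * (p - shp q p)"

definition phi :: "real \<Rightarrow> real \<Rightarrow> real \<Rightarrow> nat \<Rightarrow> real" where
  "phi s q A k = s * q^2 * ((1/q)^k - 1) - A * (1 - q^k)"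

lemma coeff_Eop_0: "coeff (Eop s q A B p) 0 = 0"
  by (simp add: Eop_def coeff_shp)

lemma coeff_Eop_Suc: "coeff (Eop s q A B p) (Suc i) =
   phi s q A (Suc i) * coeff p (Suc i) - B * (1 - q^i) * coeff p i"
  by (simp add: Eop_def coeff_shp phi_def mult_pCons_left coeff_pCons algebra_simps del: power_Suc)

fun bb :: "real \<Rightarrow> real \<Rightarrow> real \<Rightarrow> real \<Rightarrow> nat \<Rightarrow> nat \<Rightarrow> real" where
  "bb s q A B n 0 = 1"
| "bb s q A B n (Suc d) = phi s q A (n - d) * bb s q A B n d / (B * (q^n - q^(n - Suc d)))"

definition cf :: "real \<Rightarrow> real \<Rightarrow> real \<Rightarrow> real \<Rightarrow> nat \<Rightarrow> nat \<Rightarrow> real" where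
  "cf s q A B n i = (if i \<le> n then bb s q A B n (n - i) else 0)"

definition Pn :: "real \<Rightarrow> real \<Rightarrow> real \<Rightarrow> real \<Rightarrow> nat \<Rightarrow> real poly" where
  "Pn s q A B n = (\<Sum>i\<le>n. monom (cf s q A B n i) i)"

lemma coeff_Pn: "coeff (Pn s q A B n) k = cf s q A B n k"
  by (simp add: Pn_def coeff_sum cf_def)

lemma cf_rec: "i < n \<Longrightarrow> cf s q A B n i = phi s q A (Suc i) * cf s q A B n (Suc i) / (B * (q^n - q^i))"
proof -
  assume "i < n"
  then have e: "n - i = Suc (n - Suc i)" by simp
  have "n - (n - Suc i) = Suc i" "n - Suc (n - Suc i) = i" using \<open>i < n\<close> by auto
  then show ?thesis using \<open>i < n\<close> unfolding cf_def by (simp add: e)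
qed

lemma degree_Pn: "degree (Pn s q A B n) = n"
proof (rule antisym)
  show "degree (Pn s q A B n) \<le> n"
    by (rule degree_le) (simp add: coeff_Pn cf_def)
  show "n \<le> degree (Pn s q A B n)"
    by (rule le_degree) (simp add: coeff_Pn cf_def)
qed

lemma Eop_Pn:
  assumes q: "0 < q" "q < 1" and B: "B \<noteq> 0"
  shows "Eop s q A B (Pn s q A B n) = smult (- B * (1 - q^n)) (pCons 0 (Pn s q A B n))"
proof (rule poly_eqI)
  fix k show "coeff (Eop s q A B (Pn s q A B n)) k = coeff (smult (- B * (1 - q^n)) (pCons 0 (Pn s q A B n))) k"
  proof (cases k)
    case 0 then show ?thesis by (simp add: coeff_Eop_0)
  next
    case (Suc i)
    have "cf s q A B n (Suc i) * phi s q A (Suc i) - B * (1 - q^i) * cf s q A B n i = - B * (1 - q^n) * cf s q A B n i"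
    proof (cases "i < n")
      case True
      have "q^i \<noteq> q^n" using True q by (metis nat_neq_iff power_strict_decreasing_iff)
      then have d: "B * (q^n - q^i) \<noteq> 0" using B by simp
      show ?thesis using cf_rec[OF True, of s q A B] d by (simp add: field_simps)
    next
      case False
      then show ?thesis by (cases "i = n") (auto simp: cf_def)
    qed
    then show ?thesis by (simp add: Suc coeff_Eop_Suc coeff_Pn mult.commute)
  qed
qed

lemma LE_h1: "(r::real) \<noteq> 0 \<Longrightarrow> q \<noteq> 0 \<Longrightarrow> x \<noteq> 0 \<Longrightarrow>
  ((v-w)/(r*x) - (u-v)/(r*((1/q)*x))) / ((-(r/q)) * x) = q*(q*(u-v) - (v-w))/(r^2*x^2)"
  by (simp add: divide_simps power2_eq_square) (simp add: algebra_simps)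

lemma LE_h2: "(r::real) \<noteq> 0 \<Longrightarrow> q \<noteq> 0 \<Longrightarrow> x \<noteq> 0 \<Longrightarrow> q = 1 - r \<Longrightarrow>
  s * x * (q*(q*(u-v) - (v-w))/(r^2*x^2)) + (t0 + x * t) * ((v-w)/(r*x))
  = (s*q^2*(u - v) - (s*q + (q-1)*t0 + (q-1)*t*x) * (v - w)) / (r^2 * x)"
  by (simp add: divide_simps power2_eq_square) (simp add: algebra_simps)

lemma LE_pointwise:
  assumes q: "0 < q" "q < 1" and x: "x \<noteq> 0"
  shows "poly [:0,s:] x * qD (1/q) (qD q (poly p)) x + poly [:t0,t:] x * qD q (poly p) x
     = poly (Eop s q (s*q + (q-1)*t0) ((q-1)*t) p) x / ((1-q)^2 * x)"
proof -
  have x1: "(1/q) * x \<noteq> 0" "q * x \<noteq> 0" using q x by auto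
  have qq: "q * ((1/q) * x) = x" using q by simp
  have ne: "1 - q \<noteq> 0" "1 - 1/q \<noteq> 0" "q \<noteq> 0" using q by auto
  define u where "u = poly p ((1/q) * x)"
  define v where "v = poly p x"
  define w where "w = poly p (q * x)"
  have L: "qD (1/q) (qD q (poly p)) x = ((v - w) / ((1-q)*x) - (u - v) / ((1-q)*((1/q)*x))) / ((1 - 1/q) * x)"
    unfolding qD_def using x x1 qq by (simp add: u_def v_def w_def)
  have D: "qD q (poly p) x = (v - w) / ((1-q)*x)" unfolding qD_def using x by (simp add: v_def w_def)
  have E: "poly (Eop s q (s*q + (q-1)*t0) ((q-1)*t) p) x = s*q^2*(u - v) - (s*q + (q-1)*t0 + (q-1)*t*x) * (v - w)"
    by (simp add: Eop_def u_def v_def w_def algebra_simps)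
  have L2: "qD (1/q) (qD q (poly p)) x = q * (q*(u - v) - (v - w)) / ((1-q)^2 * x^2)"
  proof -
    have "1 - 1/q = -((1-q)/q)" using ne by (simp add: field_simps)
    then show ?thesis unfolding L using LE_h1[of "1-q" q x v w u] ne x by simp
  qed
  show ?thesis unfolding L2 D E using LE_h2[of "1-q" q x s u v w t0 t] ne x by (simp add: mult.commute)
qed

lemma lambda_eq: "qEHT_lambda q [:0,s:] [:t0,t:] n = - ((1 - q^n) / (1 - q)) * t"
proof -
  have "coeff [:0,s:] 2 = 0" by (simp add: numeral_2_eq_2)
  then show ?thesis by (simp add: qEHT_lambda_def qnum_def)
qed

lemma deriv_poly0: "deriv (poly p) 0 = coeff p 1"
proof -
  have "deriv (poly p) 0 = poly (pderiv p) 0"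
    by (rule DERIV_imp_deriv) (rule poly_DERIV)
  then show ?thesis by (simp add: poly_0_coeff_0 coeff_pderiv)
qed

lemma qEHT_Pn:
  assumes q: "0 < q" "q < 1" and t: "t \<noteq> 0"
  shows "qEHT_solution q [:0,s:] [:t0,t:] (qEHT_lambda q [:0,s:] [:t0,t:] n)
           (poly (Pn s q (s*q + (q-1)*t0) ((q-1)*t) n))"
  unfolding qEHT_solution_def lambda_eq
proof
  fix x
  define P where "P = Pn s q (s*q + (q-1)*t0) ((q-1)*t) n"
  have B: "(q-1)*t \<noteq> 0" using q t by simp
  have E: "Eop s q (s*q + (q-1)*t0) ((q-1)*t) P = smult (- ((q-1)*t) * (1 - q^n)) (pCons 0 P)"
    unfolding P_def by (rule Eop_Pn[OF q B])
  have ne: "1 - q \<noteq> 0" using q by simp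
  show "poly [:0, s:] x * qD (1 / q) (qD q (poly P)) x + poly [:t0, t:] x * qD q (poly P) x +
         - ((1 - q ^ n) / (1 - q)) * t * poly P x = 0"
  proof (cases "x = 0")
    case False
    have "poly [:0, s:] x * qD (1 / q) (qD q (poly P)) x + poly [:t0, t:] x * qD q (poly P) x
       = - ((q-1)*t) * (1 - q^n) * x * poly P x / ((1-q)^2 * x)"
      using LE_pointwise[OF q False, of s P t0 t] E by simp
    also have "\<dots> = ((1 - q ^ n) / (1 - q)) * t * poly P x"
      using False ne by (simp add: divide_simps power2_eq_square) (simp add: algebra_simps)
    finally show ?thesis by simp
  next
    case True
    have c1: "coeff (Eop s q (s*q + (q-1)*t0) ((q-1)*t) P) 1 = phi s q (s*q + (q-1)*t0) 1 * coeff P 1"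
      using coeff_Eop_Suc[of s q _ _ P 0] by simp
    have e1: "phi s q (s*q + (q-1)*t0) 1 * coeff P 1 = - ((q-1)*t) * (1 - q^n) * coeff P 0"
      using c1 E by simp
    have e2: "phi s q (s*q + (q-1)*t0) 1 = (1-q)^2 * t0"
      using q by (simp add: phi_def power2_eq_square field_simps)
    have e3: "(1-q)^2 * t0 * coeff P 1 = - ((q-1)*t) * (1 - q^n) * coeff P 0"
      using e1 unfolding e2 .
    have a: "(1-q)^2 * (t0 * coeff P 1) = (1-q) * ((1 - q ^ n) * t * coeff P 0)"
      using e3 by (simp add: algebra_simps)
    have "(1-q) * ((1 - q ^ n) * t * coeff P 0) = (1-q)^2 * (((1 - q ^ n) / (1 - q)) * t * coeff P 0)"
      using ne by (simp add: power2_eq_square)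
    with a have "(1-q)^2 * (t0 * coeff P 1) = (1-q)^2 * (((1 - q ^ n) / (1 - q)) * t * coeff P 0)"
      by simp
    then have "t0 * coeff P 1 = ((1 - q ^ n) / (1 - q)) * t * coeff P 0"
      using ne by (metis mult_left_cancel power_not_zero)
    then show ?thesis using True by (simp add: qD_def deriv_poly0 poly_0_coeff_0)
  qed
qed



lemma qpoch_conv:
  fixes q \<beta> :: real
  assumes q: "0 < q" "q < 1" and b: "\<beta> \<le> 0"
  shows "convergent_prod (\<lambda>k. 1 - \<beta> * q ^ k)"
proof -
  have "summable (\<lambda>k. \<bar>- \<beta> * q ^ k\<bar>)"
    using q by (simp add: abs_mult summable_geometric)
  moreover have "\<And>k. - \<beta> * q ^ k \<noteq> -1"
  proof -
    fix k have "0 \<le> - \<beta> * q ^ k" using q b by (simp add: mult_nonpos_nonneg)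
    then show "- \<beta> * q ^ k \<noteq> -1" by linarith
  qed
  ultimately have "convergent_prod (\<lambda>k. 1 + (- \<beta> * q ^ k))"
    by (rule summable_imp_convergent_prod_real)
  then show ?thesis by simp
qed

lemma qpoch_ge1:
  assumes q: "0 < q" "q < 1" and b: "\<beta> \<le> 0"
  shows "1 \<le> qpoch_inf \<beta> q"
  unfolding qpoch_inf_def
proof (rule prodinf_nonneg)
  show "(\<lambda>k. 1 - \<beta> * q ^ k) has_prod (\<Prod>k. 1 - \<beta> * q ^ k)"
    using qpoch_conv[OF q b] by (rule convergent_prod_has_prod)
  fix i show "1 \<le> 1 - \<beta> * q ^ i" using q b by (simp add: mult_nonpos_nonneg)
qed

lemma qpoch_step:
  assumes q: "0 < q" "q < 1" and b: "\<beta> \<le> 0"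
  shows "qpoch_inf \<beta> q = (1 - \<beta>) * qpoch_inf (\<beta> * q) q"
proof -
  have "(\<Prod>n. 1 - \<beta> * q ^ Suc n) = (\<Prod>k. 1 - \<beta> * q ^ k) / (1 - \<beta> * q ^ 0)"
    by (rule prodinf_split_head[where f="\<lambda>k. 1 - \<beta> * q ^ k"]) (use qpoch_conv[OF q b] b in auto)
  moreover have "(\<lambda>n. 1 - \<beta> * q ^ Suc n) = (\<lambda>n. 1 - \<beta> * q * q ^ n)" by (simp add: mult.assoc)
  ultimately have "qpoch_inf (\<beta> * q) q = qpoch_inf \<beta> q / (1 - \<beta>)"
    unfolding qpoch_inf_def by simp
  moreover have "1 - \<beta> \<noteq> 0" using b by simp
  ultimately show ?thesis by simp
qed

definition rho :: "real \<Rightarrow> real \<Rightarrow> real \<Rightarrow> int \<Rightarrow> real" where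
  "rho q Y a2 j = Y powi j / qpoch_inf (q powi j / a2) q"

lemma rho_pos:
  assumes q: "0 < q" "q < 1" and Y: "0 < Y" and a2: "a2 < 0"
  shows "0 < rho q Y a2 j"
proof -
  have "q powi j / a2 \<le> 0" using q a2 by (simp add: divide_nonneg_neg)
  then have "1 \<le> qpoch_inf (q powi j / a2) q" using qpoch_ge1 q by blast
  then show ?thesis unfolding rho_def using Y by simp
qed

lemma rho_Suc:
  assumes q: "0 < q" "q < 1" and Y: "0 < Y" and a2: "a2 < 0"
  shows "rho q Y a2 (j + 1) = rho q Y a2 j * (Y - Y / a2 * q powi j)"
proof -
  have b: "q powi j / a2 \<le> 0" using q a2 by (simp add: divide_nonneg_neg)
  have e: "q powi (j+1) / a2 = q powi j / a2 * q" using q by (simp add: power_int_add_1)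
  have p: "qpoch_inf (q powi j / a2) q = (1 - q powi j / a2) * qpoch_inf (q powi (j+1) / a2) q"
    unfolding e by (rule qpoch_step[OF q b])
  have n1: "1 - q powi j / a2 \<noteq> 0" using b by linarith
  have n2: "qpoch_inf (q powi (j+1) / a2) q \<noteq> 0"
  proof -
    have "q powi (j+1) / a2 \<le> 0" using q a2 by (simp add: divide_nonneg_neg)
    then show ?thesis using qpoch_ge1[OF q] by fastforce
  qed
  have yy: "Y powi (j+1) = Y powi j * Y" using Y by (simp add: power_int_add_1)
  have cc: "Y - Y / a2 * q powi j = Y * (1 - q powi j / a2)" by (simp add: algebra_simps)
  have g: "\<And>a c D. c \<noteq> 0 \<Longrightarrow> D \<noteq> 0 \<Longrightarrow> a * Y / D = a / (c * D) * (Y * c)"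
    by (simp add: field_simps)
  show ?thesis unfolding rho_def p yy cc by (rule g[OF n1 n2])
qed



lemma poly_bound:
  fixes p :: "real poly"
  shows "\<bar>poly p x\<bar> \<le> (\<Sum>i\<le>degree p. \<bar>coeff p i\<bar>) * max 1 \<bar>x\<bar> ^ degree p"
proof -
  have "\<bar>poly p x\<bar> \<le> (\<Sum>i\<le>degree p. \<bar>coeff p i * x ^ i\<bar>)"
    unfolding poly_altdef by (rule sum_abs)
  also have "\<dots> \<le> (\<Sum>i\<le>degree p. \<bar>coeff p i\<bar> * max 1 \<bar>x\<bar> ^ degree p)"
  proof (rule sum_mono)
    fix i assume "i \<in> {..degree p}"
    then have "\<bar>x\<bar> ^ i \<le> max 1 \<bar>x\<bar> ^ i" "max 1 \<bar>x\<bar> ^ i \<le> max 1 \<bar>x\<bar> ^ degree p"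
      by (auto intro!: power_mono power_increasing)
    then show "\<bar>coeff p i * x ^ i\<bar> \<le> \<bar>coeff p i\<bar> * max 1 \<bar>x\<bar> ^ degree p"
      by (simp add: abs_mult power_abs mult_left_mono)
  qed
  also have "\<dots> = (\<Sum>i\<le>degree p. \<bar>coeff p i\<bar>) * max 1 \<bar>x\<bar> ^ degree p"
    by (simp add: sum_distrib_right)
  finally show ?thesis .
qed

lemma qpowi_neg: "0 < q \<Longrightarrow> (q::real) powi (- int n) = (1/q) ^ n"
  by (simp add: power_int_minus power_inverse divide_inverse)

lemma rho_summable:
  assumes q: "0 < q" "q < 1" and Y: "0 < Y" "q * Y < 1" and a2: "a2 < 0"
    and r0: "poly r 0 = 0"
  shows "(\<lambda>j. rho q Y a2 j * poly r (q powi j)) summable_on UNIV"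
proof -
  obtain c r' where rr: "r = pCons c r'" by (cases r) auto
  have "c = 0" using r0 rr by simp
  then have pr: "\<And>x. poly r x = x * poly r' x" using rr by simp
  define M where "M = (\<Sum>i\<le>degree r'. \<bar>coeff r' i\<bar>)"
  define N where "N = degree r'"
  have M0: "0 \<le> M" unfolding M_def by (simp add: sum_nonneg)
  have pb: "\<And>x. \<bar>poly r' x\<bar> \<le> M * max 1 \<bar>x\<bar> ^ N" unfolding M_def N_def by (rule poly_bound)
  define f where "f = (\<lambda>j. rho q Y a2 j * poly r (q powi j))"
  have rpos: "\<And>j. 0 < rho q Y a2 j" using rho_pos[OF q Y(1) a2] .
  have s1: "summable (\<lambda>k. norm (f (int k)))"
  proof (rule summable_comparison_test)
    show "summable (\<lambda>k. M * (q * Y) ^ k)"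
      using q Y by (intro summable_mult summable_geometric) simp
    show "\<exists>Na. \<forall>n\<ge>Na. norm (norm (f (int n))) \<le> M * (q * Y) ^ n"
    proof (intro exI allI impI)
      fix n :: nat
      have b: "q ^ n / a2 \<le> 0" using q a2 by (simp add: divide_nonneg_neg)
      have "rho q Y a2 (int n) \<le> Y ^ n"
        unfolding rho_def using qpoch_ge1[OF q b] Y by (simp add: divide_le_eq mult_le_cancel_left1)
      moreover have "\<bar>poly r' (q^n)\<bar> \<le> M"
      proof -
        have "q ^ n \<le> 1" using q by (simp add: power_le_one)
        then show ?thesis using pb[of "q^n"] q by simp
      qed
      ultimately have "rho q Y a2 (int n) * (q^n * \<bar>poly r' (q^n)\<bar>) \<le> Y ^ n * (q^n * M)"
        using rpos[of "int n"] q Y M0 by (intro mult_mono) auto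
      then show "norm (norm (f (int n))) \<le> M * (q * Y) ^ n"
        unfolding f_def pr using rpos[of "int n"] q
        by (simp add: abs_mult power_mult_distrib mult_ac)
    qed
  qed
  define m where "m = (\<lambda>k::nat. - int (Suc k))"
  define X where "X = (\<lambda>k::nat. (1/q) ^ Suc k)"
  have Xm: "\<And>k. q powi (m k) = X k" unfolding m_def X_def by (rule qpowi_neg[OF q(1)])
  have X1: "\<And>k. 1 \<le> X k" unfolding X_def using q by (intro one_le_power) simp
  define v where "v = (\<lambda>k. rho q Y a2 (m k) * M * X k ^ Suc N)"
  have s2v: "summable v"
  proof -
    define K where "K = - Y / a2"
    have K: "0 < K" unfolding K_def using Y a2 by (simp add: divide_pos_neg)
    have q1: "1 < 1/q" using q by simp
    obtain k0 where k0: "2 / (K * q ^ Suc N) < (1/q) ^ k0" using real_arch_pow[OF q1] by blast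
    show ?thesis
    proof (rule summable_ratio_test[where c="1/2" and N=k0])
      fix k assume kk: "k0 \<le> k"
      have mk: "m k = m (Suc k) + 1" unfolding m_def by simp
      have rec: "rho q Y a2 (m k) = rho q Y a2 (m (Suc k)) * (Y + K * X (Suc k))"
        unfolding mk rho_Suc[OF q Y(1) a2] Xm K_def by (simp add: algebra_simps)
      have XS: "X (Suc k) = X k / q" unfolding X_def by simp
      have "(1/q) ^ k0 \<le> X (Suc k)" unfolding X_def using q1 kk by (intro power_increasing) auto
      with k0 have "2 / (K * q ^ Suc N) < X (Suc k)" by simp
      then have big: "2 < K * X (Suc k) * q ^ Suc N" using K q by (simp add: divide_less_eq mult_ac)
      have "v k = v (Suc k) * ((Y + K * X (Suc k)) * q ^ Suc N)"
        unfolding v_def rec XS using q by (simp add: field_simps power_divide)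
      moreover have "0 \<le> v (Suc k)" unfolding v_def using rpos M0 X1
        by (meson less_imp_le mult_nonneg_nonneg order_trans zero_le_one zero_le_power)
      moreover have "2 \<le> (Y + K * X (Suc k)) * q ^ Suc N" using big Y q
        by (smt (verit, best) mult_nonneg_nonneg zero_le_power distrib_right)
      ultimately have "2 * v (Suc k) \<le> v k" by (metis mult_left_mono mult.commute)
      moreover have "0 \<le> v (Suc k)" by fact
      ultimately show "norm (v (Suc k)) \<le> 1/2 * norm (v k)" by simp
    qed simp
  qed
  have s2: "summable (\<lambda>k. norm (f (m k)))"
  proof (rule summable_comparison_test)
    show "summable v" by (rule s2v)
    show "\<exists>Na. \<forall>n\<ge>Na. norm (norm (f (m n))) \<le> v n"
    proof (intro exI allI impI)
      fix n :: nat
      have "\<bar>poly r' (X n)\<bar> \<le> M * X n ^ N" using pb[of "X n"] X1[of n] by simp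
      then have "X n * \<bar>poly r' (X n)\<bar> \<le> X n * (M * X n ^ N)" using X1[of n] by (simp add: mult_left_mono)
      then have "rho q Y a2 (m n) * (X n * \<bar>poly r' (X n)\<bar>) \<le> rho q Y a2 (m n) * (X n * (M * X n ^ N))"
        using rpos[of "m n"] by (simp add: mult_left_mono)
      then show "norm (norm (f (m n))) \<le> v n"
        unfolding f_def pr v_def Xm using rpos[of "m n"] X1[of n]
        by (simp add: abs_mult mult_ac)
    qed
  qed
  have a1: "f summable_on range int"
  proof -
    have "(f \<circ> int) summable_on UNIV" using norm_summable_imp_summable_on[OF s1] by (simp add: o_def)
    then show ?thesis by (subst summable_on_reindex) (auto simp: inj_on_def)
  qed
  have a2': "f summable_on range m"
  proof -
    have "(f \<circ> m) summable_on UNIV" using norm_summable_imp_summable_on[OF s2] by (simp add: o_def)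
    then show ?thesis by (subst summable_on_reindex) (auto simp: inj_on_def m_def)
  qed
  have U: "range int \<union> range m = (UNIV :: int set)"
  proof -
    have "j \<in> range int \<union> range m" for j :: int
    proof (cases "0 \<le> j")
      case True then show ?thesis by (metis UnI1 nonneg_int_cases rangeI)
    next
      case False
      then have "j = m (nat (- j - 1))" unfolding m_def by simp
      then show ?thesis by blast
    qed
    then show ?thesis by blast
  qed
  have "f summable_on (range int \<union> range m)"
    by (rule summable_on_Un_disjoint[OF a1 a2']) (auto simp: m_def)
  then show ?thesis unfolding U f_def .
qed



lemma qpowi_pred: "0 < q \<Longrightarrow> (q::real) powi (j - 1) = (1/q) * q powi j"
proof -
  assume q: "0 < q"
  have "q powi j = q powi ((j - 1) + 1)" by simp
  also have "\<dots> = q powi (j - 1) * q" using q power_int_add_1[of q "j-1"] by simp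
  finally show ?thesis using q by (simp add: field_simps)
qed

lemma qpowi_succ: "0 < q \<Longrightarrow> (q::real) powi (j + 1) = q * q powi j"
  by (simp add: power_int_add_1')

lemma sym_sum:
  assumes q: "0 < q" "q < 1" and Y: "0 < Y" "q * Y < 1" and a2: "a2 < 0"
    and hA: "s * q^2 * Y = A" and hB: "s * q^2 * (- Y / a2) = B"
    and eig: "Eop s q A B P = smult \<mu> (pCons 0 P)"
  shows "((\<lambda>j. \<mu> * (rho q Y a2 j * poly (pCons 0 (P * Z)) (q powi j))) has_sum
          (- (\<Sum>\<^sub>\<infinity>j. s * q^2 * rho q Y a2 (j+1) * (poly P (q powi j) - poly P (q * q powi j))
                  * (poly Z (q powi j) - poly Z (q * q powi j))))) UNIV"
proof -
  define \<rho> where "\<rho> = rho q Y a2"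
  define x where "x = (\<lambda>j::int. q powi j)"
  have pear: "\<And>j. s * q^2 * \<rho> (j+1) = \<rho> j * (A + B * x j)"
    unfolding \<rho>_def x_def rho_Suc[OF q Y(1) a2] hA[symmetric] hB[symmetric] by (simp add: algebra_simps)
  have rS: "\<And>j. \<rho> (j+1) = \<rho> j * poly [:Y, - Y / a2:] (x j)"
    unfolding \<rho>_def x_def rho_Suc[OF q Y(1) a2] by (simp add: algebra_simps)
  define U where "U = (\<lambda>j. s * q^2 * \<rho> (j+1) * (poly P (x j) - poly P (q * x j)) * poly Z (q * x j))"
  define V where "V = (\<lambda>j. s * q^2 * \<rho> (j+1) * (poly P (x j) - poly P (q * x j)) * poly Z (x j))"
  have sU: "U summable_on UNIV"
  proof -
    have "U = (\<lambda>j. rho q Y a2 j * poly (smult (s*q^2) ([:Y, - Y / a2:] * (P - shp q P) * shp q Z)) (q powi j))"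
      unfolding U_def rS by (rule ext) (simp add: \<rho>_def x_def algebra_simps diff_divide_distrib add_divide_distrib)
    moreover have "poly (smult (s*q^2) ([:Y, - Y / a2:] * (P - shp q P) * shp q Z)) 0 = 0" by simp
    ultimately show ?thesis using rho_summable[OF q Y a2] by metis
  qed
  have sV: "V summable_on UNIV"
  proof -
    have "V = (\<lambda>j. rho q Y a2 j * poly (smult (s*q^2) ([:Y, - Y / a2:] * (P - shp q P) * Z)) (q powi j))"
      unfolding V_def rS by (rule ext) (simp add: \<rho>_def x_def algebra_simps diff_divide_distrib add_divide_distrib)
    moreover have "poly (smult (s*q^2) ([:Y, - Y / a2:] * (P - shp q P) * Z)) 0 = 0" by simp
    ultimately show ?thesis using rho_summable[OF q Y a2] by metis
  qed
  have hU: "(U has_sum infsum U UNIV) UNIV" using sU by simp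
  have hU': "((\<lambda>j. U (j - 1)) has_sum infsum U UNIV) UNIV"
  proof -
    have "bij_betw (\<lambda>j::int. j - 1) UNIV UNIV"
      by (rule bij_betwI[where g="\<lambda>j. j + 1"]) auto
    then show ?thesis using hU has_sum_reindex_bij_betw by blast
  qed
  have hV: "(V has_sum infsum V UNIV) UNIV" using sV by simp
  have hD: "((\<lambda>j. U (j - 1) + - V j) has_sum (infsum U UNIV + - infsum V UNIV)) UNIV"
    by (intro has_sum_add hU' has_sum_uminusI hV)
  have pt: "\<mu> * (\<rho> j * poly (pCons 0 (P * Z)) (x j)) = U (j - 1) + - V j" for j
  proof -
    have xm: "x (j - 1) = (1/q) * x j" unfolding x_def by (rule qpowi_pred[OF q(1)])
    have qx: "q * ((1/q) * x j) = x j" using q by simp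
    have E: "s * q^2 * (poly P ((1/q) * x j) - poly P (x j)) - (A + B * x j) * (poly P (x j) - poly P (q * x j))
             = \<mu> * x j * poly P (x j)"
      using arg_cong[OF eig, of "\<lambda>p. poly p (x j)"] by (simp add: Eop_def algebra_simps)
    have "U (j - 1) = s * q^2 * \<rho> j * (poly P ((1/q) * x j) - poly P (x j)) * poly Z (x j)"
      unfolding U_def xm qx by simp
    moreover have "V j = \<rho> j * (A + B * x j) * (poly P (x j) - poly P (q * x j)) * poly Z (x j)"
      unfolding V_def pear by simp
    ultimately have "U (j - 1) + - V j = \<rho> j * poly Z (x j) *
       (s * q^2 * (poly P ((1/q) * x j) - poly P (x j)) - (A + B * x j) * (poly P (x j) - poly P (q * x j)))"
      by (simp add: algebra_simps)
    also have "\<dots> = \<rho> j * poly Z (x j) * (\<mu> * x j * poly P (x j))" unfolding E ..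
    finally show ?thesis by (simp add: algebra_simps)
  qed
  have F: "(\<Sum>\<^sub>\<infinity>j. s * q^2 * rho q Y a2 (j+1) * (poly P (q powi j) - poly P (q * q powi j))
                  * (poly Z (q powi j) - poly Z (q * q powi j))) = infsum V UNIV - infsum U UNIV"
  proof -
    have "(\<lambda>j. s * q^2 * rho q Y a2 (j+1) * (poly P (q powi j) - poly P (q * q powi j))
                  * (poly Z (q powi j) - poly Z (q * q powi j))) = (\<lambda>j. V j + - U j)"
      by (auto simp: fun_eq_iff U_def V_def \<rho>_def x_def algebra_simps)
    moreover have "((\<lambda>j. V j + - U j) has_sum (infsum V UNIV + - infsum U UNIV)) UNIV"
      by (intro has_sum_add hV has_sum_uminusI hU)
    ultimately show ?thesis by (simp add: infsumI)
  qed
  show ?thesis unfolding F using hD pt unfolding \<rho>_def x_def by simp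
qed



lemma qpowi_inj: "0 < q \<Longrightarrow> q < 1 \<Longrightarrow> inj (\<lambda>j::int. (q::real) powi j)"
  unfolding inj_def by (metis linorder_neq_iff power_int_strict_decreasing order_less_irrefl)

lemma lattice_nonroot:
  assumes q: "0 < q" "q < 1" and P: "P \<noteq> (0::real poly)"
  shows "\<exists>j. poly P (q powi j) \<noteq> 0"
proof (rule ccontr)
  assume "\<not> ?thesis"
  then have "range (\<lambda>j::int. q powi j) \<subseteq> {x. poly P x = 0}" by auto
  then have "finite (range (\<lambda>j::int. q powi j))" using poly_roots_finite[OF P] finite_subset by blast
  then have "finite (UNIV :: int set)" using finite_imageD qpowi_inj[OF q] by blast
  then show False by simp
qed

lemma infsum_pos_real:
  assumes s: "f summable_on UNIV" and nn: "\<And>j. 0 \<le> (f j :: real)" and p: "0 < f j0"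
  shows "0 < infsum f UNIV"
proof -
  have "f j0 \<le> infsum f UNIV"
    using has_sum_mono_neutral[OF has_sum_finite[of "{j0}" f] has_sum_infsum[OF s]] nn by auto
  with p show ?thesis by simp
qed

lemma ln_qpowi: "0 < q \<Longrightarrow> ln ((q::real) powi j) = of_int j * ln q"
proof -
  assume q: "0 < q"
  have "q powi j = exp (ln q) powi j" using q by simp
  also have "\<dots> = exp (of_int j * ln q)" by (rule exp_power_int)
  finally show ?thesis by simp
qed

lemma abs_cpow_qpowi:
  assumes q: "0 < q" and al: "exp (\<alpha> * complex_of_real (ln q)) = complex_of_real Y"
  shows "abs_cpow (q powi j) \<alpha> = complex_of_real (Y powi j)"
proof -
  have "abs_cpow (q powi j) \<alpha> = exp (of_int j * (\<alpha> * complex_of_real (ln q)))"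
    unfolding abs_cpow_def using q by (simp add: ln_qpowi mult_ac)
  also have "\<dots> = exp (\<alpha> * complex_of_real (ln q)) powi j" by (rule exp_power_int[symmetric])
  finally show ?thesis unfolding al by simp
qed



theorem theorem5p14:
  fixes q s t t0 a2 :: real and \<alpha> :: complex and \<sigma>1 \<tau> :: "real poly"
  assumes q: "0 < q" "q < 1"
    and sig1: "\<sigma>1 = [:0, s:]" and s: "s \<noteq> 0"
    and tau: "\<tau> = [:t0, t:]" and t: "t \<noteq> 0"
    and sig2': "coeff (sigma2 q \<sigma>1 \<tau>) 1 \<noteq> 0"
    and a2_def: "a2 = - coeff (sigma2 q \<sigma>1 \<tau>) 1 / coeff (sigma2 q \<sigma>1 \<tau>) 2"
    and Lam: "t / s < 0"
    and a2_neg: "a2 < 0"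
    and y0: "0 < q * ((1/q) * (1 + (1 - 1/q) * t0 / s))"
            "q * ((1/q) * (1 + (1 - 1/q) * t0 / s)) < 1"
    and alpha: "exp (\<alpha> * complex_of_real (ln q))
                 = complex_of_real (- (q powi (-2) * coeff (sigma2 q \<sigma>1 \<tau>) 2 * a2) / s)"
  shows "\<exists>P :: nat \<Rightarrow> real poly. \<exists>d :: nat \<Rightarrow> real.
           \<forall>n. degree (P n) = n
             \<and> qEHT_solution q \<sigma>1 \<tau> (qEHT_lambda q \<sigma>1 \<tau> n) (poly (P n))
             \<and> d n \<noteq> 0
             \<and> (\<forall>m. jackson_integral_0_inf_has q
                    (\<lambda>x. complex_of_real (poly (P n) x * poly (P m) x)
                          * (abs_cpow x \<alpha> / complex_of_real (qpoch_inf (x / a2) q)))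
                    (if m = n then complex_of_real (d n) else 0))"
proof -
  define c1 where "c1 = coeff (sigma2 q \<sigma>1 \<tau>) 1"
  define c2 where "c2 = coeff (sigma2 q \<sigma>1 \<tau>) 2"
  have c1v: "c1 = s * q + (q - 1) * t0"
    unfolding c1_def sigma2_def sig1 tau using q by (simp add: field_simps)
  have c2v: "c2 = (q - 1) * t"
    unfolding c2_def sigma2_def sig1 tau using q by (simp add: numeral_2_eq_2 field_simps)
  have c1nz: "c1 \<noteq> 0" using sig2' c1_def by simp
  have c2nz: "c2 \<noteq> 0" using c2v q t by simp
  define Y where "Y = - (q powi (-2) * c2 * a2) / s"
  define A where "A = s * q + (q - 1) * t0"
  define B where "B = (q - 1) * t"
  have a2c: "c2 * a2 = - c1" unfolding a2_def c1_def[symmetric] c2_def[symmetric] using c2nz by simp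
  have qm2: "q powi (-2) = 1 / q^2" by (simp add: power_int_minus_divide)
  have Yv: "Y = c1 / (s * q^2)" unfolding Y_def qm2 using a2c
    by (simp add: field_simps)
  have qY: "q * Y = 1 + (1 - 1/q) * t0 / s"
    unfolding Yv c1v using q s by (simp add: field_simps power2_eq_square)
  have qy0: "q * ((1/q) * (1 + (1 - 1/q) * t0 / s)) = 1 + (1 - 1/q) * t0 / s" using q by simp
  have qYe: "q * Y = q * ((1/q) * (1 + (1 - 1/q) * t0 / s))" unfolding qy0 qY ..
  have Ypos: "0 < Y" using y0(1) q unfolding qYe[symmetric] by (simp add: zero_less_mult_iff)
  have qY1: "q * Y < 1" using y0(2) unfolding qYe[symmetric] .
  have hA: "s * q^2 * Y = A" unfolding Yv A_def c1v using s q by simp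
  have hB: "s * q^2 * (- Y / a2) = B"
  proof -
    have "a2 = - c1 / c2" using a2c c2nz by (simp add: field_simps)
    then show ?thesis unfolding Yv B_def c2v[symmetric] using s q c1nz c2nz a2_neg a2c by (simp add: field_simps)
  qed
  have Bnz: "B \<noteq> 0" unfolding B_def using q t by simp
  define P where "P = Pn s q A B"
  define \<mu> where "\<mu> = (\<lambda>n::nat. - B * (1 - q^n))"
  have eig: "\<And>n. Eop s q A B (P n) = smult (\<mu> n) (pCons 0 (P n))"
    unfolding P_def \<mu>_def by (rule Eop_Pn[OF q Bnz])
  have mu_inj: "\<And>n m :: nat. \<mu> n = \<mu> m \<Longrightarrow> n = m"
  proof -
    fix n m :: nat assume "\<mu> n = \<mu> m"
    then have "q ^ n = q ^ m" unfolding \<mu>_def using Bnz by simp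
    then show "n = m" using q by (metis nat_neq_iff power_strict_decreasing_iff)
  qed
  define \<rho> where "\<rho> = rho q Y a2"
  define g where "g = (\<lambda>(n::nat) (m::nat) (j::int). \<rho> j * poly (pCons 0 (P n * P m)) (q powi j))"
  define T where "T = (\<lambda>n m. infsum (g n m) UNIV)"
  have gs: "\<And>n m. g n m summable_on UNIV"
    unfolding g_def \<rho>_def by (rule rho_summable[OF q Ypos qY1 a2_neg]) simp
  define S where "S = (\<lambda>n m. (\<Sum>\<^sub>\<infinity>j. s * q^2 * rho q Y a2 (j+1) * (poly (P n) (q powi j) - poly (P n) (q * q powi j))
                  * (poly (P m) (q powi j) - poly (P m) (q * q powi j))))"
  have SS: "\<And>n m. S n m = S m n" unfolding S_def by (simp add: mult_ac)
  have muT: "\<And>n m :: nat. \<mu> n * T n m = - S n m"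
  proof -
    fix n m :: nat
    have h1: "((\<lambda>j. \<mu> n * g n m j) has_sum (- S n m)) UNIV"
      unfolding g_def \<rho>_def S_def by (rule sym_sum[OF q Ypos qY1 a2_neg hA hB eig])
    have h2: "((\<lambda>j. \<mu> n * g n m j) has_sum (\<mu> n * T n m)) UNIV"
      unfolding T_def by (rule has_sum_cmult_right) (simp add: gs)
    show "\<mu> n * T n m = - S n m" using has_sum_unique[OF h2 h1] .
  qed
  have TT: "\<And>n m. T n m = T m n" unfolding T_def g_def by (simp add: mult.commute)
  have T0: "\<And>n m :: nat. m \<noteq> n \<Longrightarrow> T n m = 0"
  proof -
    fix n m :: nat assume nm: "m \<noteq> n"
    have "\<mu> n * T n m = \<mu> m * T n m" using muT[of n m] muT[of m n] SS[of n m] TT[of n m] by simp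
    then have "(\<mu> n - \<mu> m) * T n m = 0" by (simp add: algebra_simps)
    moreover have "\<mu> n - \<mu> m \<noteq> 0" using mu_inj nm by force
    ultimately show "T n m = 0" by simp
  qed
  have Tpos: "\<And>n :: nat. 0 < T n n"
  proof -
    fix n
    have Pnz: "P n \<noteq> 0" using degree_Pn[of s q A B n] unfolding P_def
      by (metis coeff_0 coeff_Pn cf_def bb.simps(1) diff_self_eq_0 order_refl zero_neq_one)
    obtain j0 where j0: "poly (P n) (q powi j0) \<noteq> 0" using lattice_nonroot[OF q Pnz] by blast
    have nn: "\<And>j. 0 \<le> g n n j"
      unfolding g_def \<rho>_def using rho_pos[OF q Ypos a2_neg] q
      by (simp add: less_imp_le)
    have "0 < g n n j0"
      unfolding g_def \<rho>_def using rho_pos[OF q Ypos a2_neg, of j0] q j0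
      by (simp add: mult_pos_pos power2_eq_square[symmetric])
    then show "0 < T n n" unfolding T_def by (rule infsum_pos_real[OF gs nn])
  qed
  define d where "d = (\<lambda>n. (1 - q) * T n n)"
  show ?thesis
  proof (intro exI allI conjI)
    fix n
    show "degree (P n) = n" unfolding P_def by (rule degree_Pn)
    show "qEHT_solution q \<sigma>1 \<tau> (qEHT_lambda q \<sigma>1 \<tau> n) (poly (P n))"
      unfolding sig1 tau P_def A_def B_def by (rule qEHT_Pn[OF q t])
    show "d n \<noteq> 0" unfolding d_def using Tpos[of n] q by simp
    fix m
    have Gs: "((\<lambda>j. (1 - q) * g n m j) has_sum (if m = n then d n else 0)) UNIV"
    proof -
      have "((\<lambda>j. (1 - q) * g n m j) has_sum ((1 - q) * T n m)) UNIV"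
        unfolding T_def by (rule has_sum_cmult_right) (simp add: gs)
      moreover have "(1 - q) * T n m = (if m = n then d n else 0)"
        using T0[of m n] unfolding d_def by auto
      ultimately show ?thesis by simp
    qed
    have eqf: "(\<lambda>j::int. complex_of_real ((1 - q) * q powi j) *
         (complex_of_real (poly (P n) (q powi j) * poly (P m) (q powi j))
          * (abs_cpow (q powi j) \<alpha> / complex_of_real (qpoch_inf (q powi j / a2) q))))
       = (\<lambda>j. complex_of_real ((1 - q) * g n m j))"
    proof
      fix j :: int
      have al: "exp (\<alpha> * complex_of_real (ln q)) = complex_of_real Y"
        using alpha unfolding Y_def c2_def .
      show "complex_of_real ((1 - q) * q powi j) *
         (complex_of_real (poly (P n) (q powi j) * poly (P m) (q powi j))
          * (abs_cpow (q powi j) \<alpha> / complex_of_real (qpoch_inf (q powi j / a2) q)))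
          = complex_of_real ((1 - q) * g n m j)"
        unfolding abs_cpow_qpowi[OF q(1) al] g_def \<rho>_def rho_def
        by (simp add: mult_ac)
    qed
    show "jackson_integral_0_inf_has q
          (\<lambda>x. complex_of_real (poly (P n) x * poly (P m) x)
                * (abs_cpow x \<alpha> / complex_of_real (qpoch_inf (x / a2) q)))
          (if m = n then complex_of_real (d n) else 0)"
      unfolding jackson_integral_0_inf_has_def eqf
      using has_sum_of_real[OF Gs, where 'a=complex] by (simp add: if_distrib cong: if_cong)
  qed
qed

end
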